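(* Let $A$ be a commutative unitary ring. The following are equivalent: (i) $A$ is a BL-ring; (ii) $(K:[I\otimes(J:I)])=(K:I)+(K:J)$ for all ideals $I,J,K$ of $A$.
   Context: For a commutative unitary ring $A$, $Id(A)$ is the set of ideals. For $I,J\in Id(A)$: $I+J=\{i+j: i\in I,j\in J\}$, $I\otimes J=\{\sum_{k=1}^n i_kj_k: i_k\in I, j_k\in J\}$ (ideal product), $(I:J)=\{x\in A: xJ\subseteq I\}$. Then $(Id(A),\cap,+,\otimes,\rightarrow,\{0\},A)$ with $I\rightarrow J=(J:I)$ and order $\subseteq$ is a residuated lattice. A residuated lattice is a bounded lattice with a commutative ordered monoid operation $\odot$ with unit $1$ and an operation $\rightarrow$ with $z\leq x\rightarrow y$ iff $x\odot z\leq y$; a BL-algebra is a residuated lattice satisfying $(x\rightarrow y)\vee(y\rightarrow x)=1$ and $x\odot(x\rightarrow y)=x\wedge y$. A BL-ring is a commutative unitary ring $A$ whose residuated lattice of ideals $Id(A)$ is a BL-algebra. *)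

theory Defs
  imports Main
begin

definition is_ideal :: "'a::comm_ring_1 set \<Rightarrow> bool" where
  "is_ideal I \<longleftrightarrow> 0 \<in> I \<and> (\<forall>x\<in>I. \<forall>y\<in>I. x + y \<in> I) \<and> (\<forall>a. \<forall>x\<in>I. a * x \<in> I)"

definition ideal_sum :: "'a::comm_ring_1 set \<Rightarrow> 'a set \<Rightarrow> 'a set" where
  "ideal_sum I J = {i + j | i j. i \<in> I \<and> j \<in> J}"

definition ideal_prod :: "'a::comm_ring_1 set \<Rightarrow> 'a set \<Rightarrow> 'a set" where
  "ideal_prod I J = {x. \<exists>(n::nat) f g. (\<forall>k<n. f k \<in> I \<and> g k \<in> J) \<and> x = (\<Sum>k<n. f k * g k)}"

text \<open>colon I J = (I : J) = {x. x J \<subseteq> I}\<close>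
definition colon :: "'a::comm_ring_1 set \<Rightarrow> 'a set \<Rightarrow> 'a set" where
  "colon I J = {x. \<forall>j\<in>J. x * j \<in> I}"

definition residuated_lattice ::
  "'b set \<Rightarrow> ('b \<Rightarrow> 'b \<Rightarrow> bool) \<Rightarrow> ('b \<Rightarrow> 'b \<Rightarrow> 'b) \<Rightarrow> ('b \<Rightarrow> 'b \<Rightarrow> 'b)
   \<Rightarrow> ('b \<Rightarrow> 'b \<Rightarrow> 'b) \<Rightarrow> ('b \<Rightarrow> 'b \<Rightarrow> 'b) \<Rightarrow> 'b \<Rightarrow> 'b \<Rightarrow> bool" where
  "residuated_lattice L le meet join mult imp zr one \<longleftrightarrow>
     zr \<in> L \<and> one \<in> L \<and>
     (\<forall>x\<in>L. \<forall>y\<in>L. meet x y \<in> L \<and> join x y \<in> L \<and> mult x y \<in> L \<and> imp x y \<in> L) \<and>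
     \<comment> \<open>partial order\<close>
     (\<forall>x\<in>L. le x x) \<and>
     (\<forall>x\<in>L. \<forall>y\<in>L. le x y \<and> le y x \<longrightarrow> x = y) \<and>
     (\<forall>x\<in>L. \<forall>y\<in>L. \<forall>z\<in>L. le x y \<and> le y z \<longrightarrow> le x z) \<and>
     \<comment> \<open>bounded lattice\<close>
     (\<forall>x\<in>L. \<forall>y\<in>L. \<forall>z\<in>L. le z (meet x y) \<longleftrightarrow> le z x \<and> le z y) \<and>
     (\<forall>x\<in>L. \<forall>y\<in>L. \<forall>z\<in>L. le (join x y) z \<longleftrightarrow> le x z \<and> le y z) \<and>
     (\<forall>x\<in>L. le zr x \<and> le x one) \<and>
     \<comment> \<open>commutative ordered monoid with unit one\<close>
     (\<forall>x\<in>L. \<forall>y\<in>L. mult x y = mult y x) \<and>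
     (\<forall>x\<in>L. \<forall>y\<in>L. \<forall>z\<in>L. mult (mult x y) z = mult x (mult y z)) \<and>
     (\<forall>x\<in>L. mult x one = x) \<and>
     (\<forall>x\<in>L. \<forall>y\<in>L. \<forall>z\<in>L. le x y \<longrightarrow> le (mult x z) (mult y z)) \<and>
     \<comment> \<open>residuation\<close>
     (\<forall>x\<in>L. \<forall>y\<in>L. \<forall>z\<in>L. le z (imp x y) \<longleftrightarrow> le (mult x z) y)"

definition bl_algebra ::
  "'b set \<Rightarrow> ('b \<Rightarrow> 'b \<Rightarrow> bool) \<Rightarrow> ('b \<Rightarrow> 'b \<Rightarrow> 'b) \<Rightarrow> ('b \<Rightarrow> 'b \<Rightarrow> 'b)
   \<Rightarrow> ('b \<Rightarrow> 'b \<Rightarrow> 'b) \<Rightarrow> ('b \<Rightarrow> 'b \<Rightarrow> 'b) \<Rightarrow> 'b \<Rightarrow> 'b \<Rightarrow> bool" where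
  "bl_algebra L le meet join mult imp zr one \<longleftrightarrow>
     residuated_lattice L le meet join mult imp zr one \<and>
     (\<forall>x\<in>L. \<forall>y\<in>L. join (imp x y) (imp y x) = one) \<and>
     (\<forall>x\<in>L. \<forall>y\<in>L. mult x (imp x y) = meet x y)"

definition bl_ring :: "'a::comm_ring_1 itself \<Rightarrow> bool" where
  "bl_ring (_::'a itself) \<longleftrightarrow>
     bl_algebra {I::'a set. is_ideal I} (\<subseteq>) (\<inter>) ideal_sum ideal_prod (\<lambda>I J. colon J I)
       {0} UNIV"

end

theory Submission
  imports Defs
begin

lemma sum_in_ideal:
  "is_ideal T \<Longrightarrow> (\<forall>k<(n::nat). h k \<in> T) \<Longrightarrow> (\<Sum>k<n. h k) \<in> T"
  by (induction n) (auto simp: is_ideal_def)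

lemma ideal_addD: "is_ideal T \<Longrightarrow> x \<in> T \<Longrightarrow> y \<in> T \<Longrightarrow> x + y \<in> T"
  by (auto simp: is_ideal_def)

lemma ideal_multD: "is_ideal T \<Longrightarrow> x \<in> T \<Longrightarrow> a * x \<in> T"
  by (auto simp: is_ideal_def)

lemma ideal_multD2: "is_ideal T \<Longrightarrow> x \<in> T \<Longrightarrow> x * a \<in> T"
  by (metis ideal_multD mult.commute)

lemma ideal_zero: "is_ideal T \<Longrightarrow> 0 \<in> T"
  by (auto simp: is_ideal_def)

lemma ideal_UNIV: "is_ideal T \<Longrightarrow> 1 \<in> T \<Longrightarrow> T = UNIV"
  by (metis UNIV_eq_I ideal_multD mult.right_neutral)

lemma prod_mem: "x \<in> X \<Longrightarrow> y \<in> Y \<Longrightarrow> x * y \<in> ideal_prod X Y"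
  unfolding ideal_prod_def
  by (rule CollectI, rule exI[of _ 1], rule exI[of _ "\<lambda>_. x"], rule exI[of _ "\<lambda>_. y"]) simp

lemma prod_le: "is_ideal T \<Longrightarrow> ideal_prod X Y \<subseteq> T \<longleftrightarrow> (\<forall>x\<in>X. \<forall>y\<in>Y. x * y \<in> T)"
  using prod_mem by (fastforce simp: ideal_prod_def intro!: sum_in_ideal)

lemma prod_ideal: assumes "is_ideal Y" shows "is_ideal (ideal_prod X Y)"
proof -
  have add: "a + b \<in> ideal_prod X Y" if ha: "a \<in> ideal_prod X Y" "b \<in> ideal_prod X Y" for a b
  proof -
    obtain n :: nat and f g where a: "\<forall>k<n. f k \<in> X \<and> g k \<in> Y" "a = (\<Sum>k<n. f k * g k)"
      using ha(1) unfolding ideal_prod_def by blast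
    have "\<forall>b. b \<in> ideal_prod X Y \<longrightarrow> a + b \<in> ideal_prod X Y" using a
    proof (induction n arbitrary: a)
      case 0 then show ?case by simp
    next
      case (Suc n)
      show ?case
      proof (intro allI impI)
        fix b assume b: "b \<in> ideal_prod X Y"
        obtain m :: nat and f' g' where bb: "\<forall>k<m. f' k \<in> X \<and> g' k \<in> Y" "b = (\<Sum>k<m. f' k * g' k)"
          using b unfolding ideal_prod_def by blast
        define b' where "b' = f n * g n + b"
        have "b' \<in> ideal_prod X Y" unfolding ideal_prod_def b'_def
          apply (rule CollectI, rule exI[of _ "Suc m"],
              rule exI[of _ "f'(m := f n)"], rule exI[of _ "g'(m := g n)"])
          using bb Suc.prems by (auto simp: less_Suc_eq intro!: sum.cong)
        moreover have "(\<Sum>k<n. f k * g k) + b' = a + b"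
          using Suc.prems by (simp add: b'_def algebra_simps)
        ultimately show "a + b \<in> ideal_prod X Y"
          using Suc.IH[of "\<Sum>k<n. f k * g k"] Suc.prems by (auto simp: add.assoc)
      qed
    qed
    then show ?thesis using ha(2) by blast
  qed
  have mul: "c * a \<in> ideal_prod X Y" if ha: "a \<in> ideal_prod X Y" for a c
  proof -
    obtain n :: nat and f g where a: "\<forall>k<n. f k \<in> X \<and> g k \<in> Y" "a = (\<Sum>k<n. f k * g k)"
      using ha(1) unfolding ideal_prod_def by blast
    show ?thesis unfolding ideal_prod_def
      apply (rule CollectI, rule exI[of _ n], rule exI[of _ "\<lambda>k. f k"], rule exI[of _ "\<lambda>k. c * g k"])
      using a \<open>is_ideal Y\<close> by (auto simp: sum_distrib_left ideal_multD algebra_simps)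
  qed
  have "0 \<in> ideal_prod X Y" unfolding ideal_prod_def by (rule CollectI, rule exI[of _ 0]) simp
  then show ?thesis using add mul by (auto simp: is_ideal_def)
qed


lemma sum_ideal: assumes "is_ideal X" "is_ideal Y" shows "is_ideal (ideal_sum X Y)"
proof -
  have "0 \<in> ideal_sum X Y" unfolding ideal_sum_def using assms
    by (intro CollectI exI[of _ 0]) (simp add: ideal_zero)
  moreover have "a + b \<in> ideal_sum X Y" if hh: "a \<in> ideal_sum X Y" "b \<in> ideal_sum X Y" for a b
  proof -
    obtain x y x' y' where "x \<in> X" "y \<in> Y" "x' \<in> X" "y' \<in> Y" "a = x + y" "b = x' + y'"
      using hh unfolding ideal_sum_def by blast
    then show ?thesis unfolding ideal_sum_def using assms
      by (intro CollectI exI[of _ "x + x'"] exI[of _ "y + y'"]) (auto simp: ideal_addD algebra_simps)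
  qed
  moreover have "c * a \<in> ideal_sum X Y" if hh: "a \<in> ideal_sum X Y" for a c
  proof -
    obtain x y where "x \<in> X" "y \<in> Y" "a = x + y"
      using hh unfolding ideal_sum_def by blast
    then show ?thesis unfolding ideal_sum_def using assms
      by (intro CollectI exI[of _ "c * x"] exI[of _ "c * y"]) (auto simp: ideal_multD algebra_simps)
  qed
  ultimately show ?thesis by (auto simp: is_ideal_def)
qed

lemma sum_memL: "is_ideal Y \<Longrightarrow> x \<in> X \<Longrightarrow> x \<in> ideal_sum X Y"
  unfolding ideal_sum_def by (force simp: ideal_zero)

lemma sum_memR: "is_ideal X \<Longrightarrow> y \<in> Y \<Longrightarrow> y \<in> ideal_sum X Y"
  unfolding ideal_sum_def by (force simp: ideal_zero)

lemma sum_le: assumes "is_ideal X" "is_ideal Y" "is_ideal T" shows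
   "ideal_sum X Y \<subseteq> T \<longleftrightarrow> X \<subseteq> T \<and> Y \<subseteq> T"
proof
  assume "ideal_sum X Y \<subseteq> T"
  then show "X \<subseteq> T \<and> Y \<subseteq> T" using sum_memL[OF assms(2)] sum_memR[OF assms(1)] by blast
next
  assume "X \<subseteq> T \<and> Y \<subseteq> T"
  then show "ideal_sum X Y \<subseteq> T" unfolding ideal_sum_def using ideal_addD[OF assms(3)] by blast
qed

lemma colon_ideal: "is_ideal K \<Longrightarrow> is_ideal (colon K I)"
  unfolding is_ideal_def colon_def by (auto simp: distrib_right mult.assoc)

lemma inter_ideal: "is_ideal X \<Longrightarrow> is_ideal Y \<Longrightarrow> is_ideal (X \<inter> Y)"
  unfolding is_ideal_def by auto

lemma zero_ideal: "is_ideal {0::'a::comm_ring_1}"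
  unfolding is_ideal_def by auto

lemma UNIV_ideal: "is_ideal (UNIV::'a::comm_ring_1 set)"
  unfolding is_ideal_def by auto

lemma prod_comm: "is_ideal X \<Longrightarrow> is_ideal Y \<Longrightarrow> ideal_prod X Y = ideal_prod Y X"
  apply (rule antisym)
   apply (subst prod_le, rule prod_ideal, assumption) apply (metis prod_mem mult.commute)
  apply (subst prod_le, rule prod_ideal, assumption) apply (metis prod_mem mult.commute)
  done

lemma prod_assoc:
  assumes "is_ideal X" "is_ideal Y" "is_ideal Z"
  shows "ideal_prod (ideal_prod X Y) Z = ideal_prod X (ideal_prod Y Z)"
proof (rule antisym)
  let ?R = "ideal_prod X (ideal_prod Y Z)"
  have R: "is_ideal ?R" by (intro prod_ideal assms)
  have "ideal_prod X Y \<subseteq> colon ?R Z"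
  proof (subst prod_le, rule colon_ideal[OF R], intro ballI)
    fix x y assume "x \<in> X" "y \<in> Y"
    then have "\<forall>z\<in>Z. x * (y * z) \<in> ?R" by (simp add: prod_mem)
    then show "x * y \<in> colon ?R Z" unfolding colon_def by (simp add: mult.assoc)
  qed
  then show "ideal_prod (ideal_prod X Y) Z \<subseteq> ?R"
    unfolding prod_le[OF R] colon_def by blast
next
  let ?R = "ideal_prod (ideal_prod X Y) Z"
  have R: "is_ideal ?R" by (intro prod_ideal assms)
  have "ideal_prod Y Z \<subseteq> colon ?R X"
  proof (subst prod_le, rule colon_ideal[OF R], intro ballI)
    fix y z assume "y \<in> Y" "z \<in> Z"
    then have "\<forall>x\<in>X. (x * y) * z \<in> ?R" by (simp add: prod_mem)
    moreover have "(x * y) * z = (y * z) * x" for x by (simp add: ac_simps)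
    ultimately show "y * z \<in> colon ?R X" unfolding colon_def by simp
  qed
  then have "\<forall>a\<in>ideal_prod Y Z. \<forall>x\<in>X. a * x \<in> ?R" unfolding colon_def by blast
  then show "ideal_prod X (ideal_prod Y Z) \<subseteq> ?R"
    unfolding prod_le[OF R] by (metis (no_types, lifting) mult.commute)
qed

lemma prod_unit: assumes "is_ideal X" shows "ideal_prod X UNIV = X"
proof (rule antisym)
  show "ideal_prod X UNIV \<subseteq> X" unfolding prod_le[OF assms] using ideal_multD2[OF assms] by blast
  show "X \<subseteq> ideal_prod X UNIV"
  proof
    fix x assume "x \<in> X"
    then have "x * 1 \<in> ideal_prod X UNIV" by (intro prod_mem) auto
    then show "x \<in> ideal_prod X UNIV" by simp
  qed
qed

lemma prod_mono: assumes "is_ideal Z" "X \<subseteq> Y" shows "ideal_prod X Z \<subseteq> ideal_prod Y Z"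
  unfolding prod_le[OF prod_ideal[OF assms(1)]] using assms(2) prod_mem by blast

lemma residuation: assumes "is_ideal Y" shows "Z \<subseteq> colon Y X \<longleftrightarrow> ideal_prod X Z \<subseteq> Y"
proof -
  have "Z \<subseteq> colon Y X \<longleftrightarrow> (\<forall>z\<in>Z. \<forall>x\<in>X. z * x \<in> Y)" unfolding colon_def by blast
  also have "\<dots> \<longleftrightarrow> (\<forall>x\<in>X. \<forall>z\<in>Z. x * z \<in> Y)" by (metis (no_types, lifting) mult.commute)
  also have "\<dots> \<longleftrightarrow> ideal_prod X Z \<subseteq> Y" using prod_le[OF assms] by blast
  finally show ?thesis .
qed

lemma rl: "residuated_lattice {I::'a::comm_ring_1 set. is_ideal I} (\<subseteq>) (\<inter>) ideal_sum ideal_prod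
   (\<lambda>I J. colon J I) {0} UNIV"
  unfolding residuated_lattice_def mem_Collect_eq
  apply (intro conjI)
                 apply (rule zero_ideal)
                apply (rule UNIV_ideal)
               apply (blast intro: inter_ideal sum_ideal prod_ideal colon_ideal)
              apply blast
             apply blast
            apply blast
           apply blast
          apply (blast dest: sum_le)
         apply (blast dest: ideal_zero)
        apply (blast dest: prod_comm)
       apply (blast dest: prod_assoc)
      apply (blast dest: prod_unit)
     apply (simp add: prod_mono)
    apply (simp add: residuation)
  done

lemma one_in_sum: "1 \<in> ideal_sum X Y \<Longrightarrow> \<exists>u v. u \<in> X \<and> v \<in> Y \<and> u + v = 1"
  unfolding ideal_sum_def by force

lemma colon_self: "is_ideal X \<Longrightarrow> colon X X = UNIV"
  unfolding colon_def by (auto simp: ideal_multD)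

theorem corollary3p6:
  shows "bl_ring TYPE('a::comm_ring_1) \<longleftrightarrow>
    (\<forall>I J K :: 'a set. is_ideal I \<longrightarrow> is_ideal J \<longrightarrow> is_ideal K \<longrightarrow>
       colon K (ideal_prod I (colon J I)) = ideal_sum (colon K I) (colon K J))"
proof -
  have eq: "bl_ring TYPE('a) \<longleftrightarrow>
    (\<forall>I J :: 'a set. is_ideal I \<longrightarrow> is_ideal J \<longrightarrow> ideal_sum (colon J I) (colon I J) = UNIV) \<and>
    (\<forall>I J :: 'a set. is_ideal I \<longrightarrow> is_ideal J \<longrightarrow> ideal_prod I (colon J I) = I \<inter> J)"
    unfolding bl_ring_def bl_algebra_def using rl by auto
  show ?thesis unfolding eq
  proof (intro iffI allI impI)
    fix I J K :: "'a set"
    assume A: "(\<forall>I J :: 'a set. is_ideal I \<longrightarrow> is_ideal J \<longrightarrow> ideal_sum (colon J I) (colon I J) = UNIV) \<and>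
    (\<forall>I J :: 'a set. is_ideal I \<longrightarrow> is_ideal J \<longrightarrow> ideal_prod I (colon J I) = I \<inter> J)"
      and I: "is_ideal I" and J: "is_ideal J" and K: "is_ideal K"
    have D: "ideal_prod I (colon J I) = I \<inter> J" using A I J by blast
    have "1 \<in> ideal_sum (colon J I) (colon I J)" using A I J by blast
    then obtain u v where uv: "u \<in> colon J I" "v \<in> colon I J" "u + v = 1"
      using one_in_sum by blast
    show "colon K (ideal_prod I (colon J I)) = ideal_sum (colon K I) (colon K J)"
      unfolding D
    proof (rule antisym)
      show "colon K (I \<inter> J) \<subseteq> ideal_sum (colon K I) (colon K J)"
      proof
        fix a assume a: "a \<in> colon K (I \<inter> J)"
        have "a * u \<in> colon K I" unfolding colon_def
        proof (intro CollectI ballI)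
          fix i assume i: "i \<in> I"
          have "u * i \<in> J" using uv(1) i by (auto simp: colon_def)
          moreover have "u * i \<in> I" using I i ideal_multD by blast
          ultimately show "a * u * i \<in> K" using a by (auto simp: colon_def mult.assoc)
        qed
        moreover have "a * v \<in> colon K J" unfolding colon_def
        proof (intro CollectI ballI)
          fix i assume i: "i \<in> J"
          have "v * i \<in> I" using uv(2) i by (auto simp: colon_def)
          moreover have "v * i \<in> J" using J i ideal_multD by blast
          ultimately show "a * v * i \<in> K" using a by (auto simp: colon_def mult.assoc)
        qed
        moreover have "a = a * u + a * v" using uv(3) by (metis distrib_left mult.right_neutral)
        ultimately show "a \<in> ideal_sum (colon K I) (colon K J)" unfolding ideal_sum_def by blast
      qed
    next
      show "ideal_sum (colon K I) (colon K J) \<subseteq> colon K (I \<inter> J)"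
        using sum_le[OF colon_ideal[OF K] colon_ideal[OF K] colon_ideal[OF K]]
        by (auto simp: colon_def)
    qed
  next
    assume H: "\<forall>I J K :: 'a set. is_ideal I \<longrightarrow> is_ideal J \<longrightarrow> is_ideal K \<longrightarrow>
       colon K (ideal_prod I (colon J I)) = ideal_sum (colon K I) (colon K J)"
    have D: "ideal_prod I (colon J I) = I \<inter> J" if I: "is_ideal I" and J: "is_ideal J" for I J :: "'a set"
    proof (rule antisym)
      show "ideal_prod I (colon J I) \<subseteq> I \<inter> J"
        apply (subst prod_le, rule inter_ideal[OF I J])
        using I by (auto simp: colon_def ideal_multD2 mult.commute)
    next
      let ?w = "ideal_prod I (colon J I)"
      have w: "is_ideal ?w" by (rule prod_ideal, rule colon_ideal[OF J])
      have "1 \<in> ideal_sum (colon ?w I) (colon ?w J)" using H I J w colon_self[OF w] by auto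
      then obtain u v where uv: "u \<in> colon ?w I" "v \<in> colon ?w J" "u + v = 1"
        using one_in_sum by blast
      show "I \<inter> J \<subseteq> ?w"
      proof
        fix x assume x: "x \<in> I \<inter> J"
        have "u * x \<in> ?w" "v * x \<in> ?w" using uv x by (auto simp: colon_def)
        moreover have "x = u * x + v * x" using uv(3) by (metis distrib_right mult.left_neutral)
        ultimately show "x \<in> ?w" using ideal_addD[OF w] by metis
      qed
    qed
    have P: "\<forall>I J :: 'a set. is_ideal I \<longrightarrow> is_ideal J \<longrightarrow> ideal_sum (colon J I) (colon I J) = UNIV"
    proof (intro allI impI)
      fix I J :: "'a set" assume I: "is_ideal I" and J: "is_ideal J"
      have "colon (I \<inter> J) (ideal_prod I (colon J I)) = ideal_sum (colon (I \<inter> J) I) (colon (I \<inter> J) J)"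
        using H I J inter_ideal[OF I J] by blast
      then have "1 \<in> ideal_sum (colon (I \<inter> J) I) (colon (I \<inter> J) J)"
        using colon_self[OF inter_ideal[OF I J]] D[OF I J] by auto
      then obtain u v where uv: "u \<in> colon (I \<inter> J) I" "v \<in> colon (I \<inter> J) J" "u + v = 1"
        using one_in_sum by blast
      have "u \<in> colon J I" "v \<in> colon I J" using uv by (auto simp: colon_def)
      then have "1 \<in> ideal_sum (colon J I) (colon I J)" using uv(3) unfolding ideal_sum_def
        by (intro CollectI exI[of _ u] exI[of _ v]) simp
      then show "ideal_sum (colon J I) (colon I J) = UNIV"
        by (rule ideal_UNIV[rotated]) (intro sum_ideal colon_ideal I J)
    qed
    show "(\<forall>I J :: 'a set. is_ideal I \<longrightarrow> is_ideal J \<longrightarrow> ideal_sum (colon J I) (colon I J) = UNIV) \<and>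
      (\<forall>I J :: 'a set. is_ideal I \<longrightarrow> is_ideal J \<longrightarrow> ideal_prod I (colon J I) = I \<inter> J)"
      using P D by blast
  qed
qed

end
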